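(* Let $B$ be a finite simplicial complex. Any consistent collection of small symmetric necklaces (with morphisms) over the simplices of the $3$-skeleton of $B$ extends uniquely to a consistent collection of small symmetric necklaces over all simplices of $B$. Equivalently, for every simplex $\Delta$ of dimension at least $4$, a consistent collection of necklaces over all proper faces of $\Delta$ is the collection of restrictions of a unique necklace over $\Delta$.
   Context: A necklace over a simplex $\sigma$ is a cyclic word whose beads are colored by the vertices of $\sigma$; for a face $\tau\subset\sigma$ the necklace of $\tau$ is obtained from that of $\sigma$ by deleting all beads whose colors are not vertices of $\tau$, which gives an injective color- and cyclic-order-preserving morphism; a collection of necklaces and morphisms is consistent if these morphisms compose correctly along chains of faces. A small symmetric necklace contains exactly two beads of each color and is invariant under rotation by half its length. *)

theory Defs
  imports Main
begin

definition simplicial_complex :: "'v set set \<Rightarrow> bool" where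
  "simplicial_complex B \<longleftrightarrow> finite B \<and> (\<forall>\<sigma>\<in>B. finite \<sigma> \<and> \<sigma> \<noteq> {}) \<and>
     (\<forall>\<sigma>\<in>B. \<forall>\<tau>. \<tau> \<subseteq> \<sigma> \<and> \<tau> \<noteq> {} \<longrightarrow> \<tau> \<in> B)"

text \<open>The k-skeleton: simplices of dimension at most k (at most k+1 vertices).\<close>
definition skeleton :: "nat \<Rightarrow> 'v set set \<Rightarrow> 'v set set" where
  "skeleton k B = {\<sigma> \<in> B. card \<sigma> \<le> k + 1}"

text \<open>A necklace is a cyclic word, represented by a list w; its beads are the positions
  0..<length w, bead i has colour w!i, and positions are cyclically ordered.\<close>
definition small_symmetric :: "'v set \<Rightarrow> 'v list \<Rightarrow> bool" where
  "small_symmetric V w \<longleftrightarrow> set w \<subseteq> V \<and>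
     (\<forall>v\<in>V. card {i. i < length w \<and> w ! i = v} = 2) \<and>
     rotate (length w div 2) w = w"

definition cyc :: "nat \<Rightarrow> nat \<Rightarrow> nat \<Rightarrow> bool" where
  "cyc a b c \<longleftrightarrow> (a < b \<and> b < c) \<or> (b < c \<and> c < a) \<or> (c < a \<and> a < b)"

text \<open>Morphism from the necklace u over the face \<tau> to the necklace w: an injective,
  colour-preserving, cyclic-order-preserving map of beads whose image is exactly the
  set of beads of w with colour in \<tau> (so u is obtained from w by deleting the beads of
  colour outside \<tau>).\<close>
definition necklace_morphism :: "'v set \<Rightarrow> 'v list \<Rightarrow> 'v list \<Rightarrow> (nat \<Rightarrow> nat) \<Rightarrow> bool" where
  "necklace_morphism \<tau> u w f \<longleftrightarrow>
     inj_on f {..<length u} \<and>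
     f ` {..<length u} = {j. j < length w \<and> w ! j \<in> \<tau>} \<and>
     (\<forall>i < length u. w ! (f i) = u ! i) \<and>
     (\<forall>i < length u. \<forall>j < length u. \<forall>k < length u. cyc i j k \<longrightarrow> cyc (f i) (f j) (f k))"

definition necklace_iso :: "'v list \<Rightarrow> 'v list \<Rightarrow> (nat \<Rightarrow> nat) \<Rightarrow> bool" where
  "necklace_iso u w f \<longleftrightarrow> necklace_morphism (set w) u w f"

definition consistent_collection ::
  "'v set set \<Rightarrow> ('v set \<Rightarrow> 'v list) \<Rightarrow> ('v set \<Rightarrow> 'v set \<Rightarrow> nat \<Rightarrow> nat) \<Rightarrow> bool" where
  "consistent_collection S N F \<longleftrightarrow>
     (\<forall>\<sigma>\<in>S. small_symmetric \<sigma> (N \<sigma>)) \<and>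
     (\<forall>\<sigma>\<in>S. \<forall>\<tau>\<in>S. \<tau> \<subset> \<sigma> \<longrightarrow> necklace_morphism \<tau> (N \<tau>) (N \<sigma>) (F \<tau> \<sigma>)) \<and>
     (\<forall>\<rho>\<in>S. \<forall>\<tau>\<in>S. \<forall>\<sigma>\<in>S. \<rho> \<subset> \<tau> \<and> \<tau> \<subset> \<sigma> \<longrightarrow>
        (\<forall>i < length (N \<rho>). F \<tau> \<sigma> (F \<rho> \<tau> i) = F \<rho> \<sigma> i))"

definition extends_collection ::
  "'v set set \<Rightarrow> ('v set \<Rightarrow> 'v list) \<Rightarrow> ('v set \<Rightarrow> 'v set \<Rightarrow> nat \<Rightarrow> nat) \<Rightarrow>
   ('v set \<Rightarrow> 'v list) \<Rightarrow> ('v set \<Rightarrow> 'v set \<Rightarrow> nat \<Rightarrow> nat) \<Rightarrow> bool" where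
  "extends_collection S N F N' F' \<longleftrightarrow>
     (\<forall>\<sigma>\<in>S. N' \<sigma> = N \<sigma>) \<and>
     (\<forall>\<sigma>\<in>S. \<forall>\<tau>\<in>S. \<tau> \<subset> \<sigma> \<longrightarrow> (\<forall>i < length (N \<tau>). F' \<tau> \<sigma> i = F \<tau> \<sigma> i))"

definition iso_rel ::
  "'v set set \<Rightarrow> 'v set set \<Rightarrow>
   ('v set \<Rightarrow> 'v list) \<Rightarrow> ('v set \<Rightarrow> 'v set \<Rightarrow> nat \<Rightarrow> nat) \<Rightarrow>
   ('v set \<Rightarrow> 'v list) \<Rightarrow> ('v set \<Rightarrow> 'v set \<Rightarrow> nat \<Rightarrow> nat) \<Rightarrow> bool" where
  "iso_rel S T N1 F1 N2 F2 \<longleftrightarrow>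
     (\<exists>\<phi> :: 'v set \<Rightarrow> nat \<Rightarrow> nat.
        (\<forall>\<sigma>\<in>T. necklace_iso (N1 \<sigma>) (N2 \<sigma>) (\<phi> \<sigma>)) \<and>
        (\<forall>\<sigma>\<in>S. \<forall>i < length (N1 \<sigma>). \<phi> \<sigma> i = i) \<and>
        (\<forall>\<sigma>\<in>T. \<forall>\<tau>\<in>T. \<tau> \<subset> \<sigma> \<longrightarrow>
           (\<forall>i < length (N1 \<tau>). \<phi> \<sigma> (F1 \<tau> \<sigma> i) = F2 \<tau> \<sigma> (\<phi> \<tau> i))))"

end

theory Submission
  imports Defs
begin


definition bd :: "'v set \<Rightarrow> ('v \<times> nat) set" where "bd V = V \<times> {0,1}"

definition good :: "'v set \<Rightarrow> 'v list \<Rightarrow> ('v \<times> nat \<Rightarrow> nat) \<Rightarrow> ('v \<times> nat \<Rightarrow> 'v \<times> nat \<Rightarrow> 'v \<times> nat \<Rightarrow> bool) \<Rightarrow> bool" where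
  "good V w g R \<longleftrightarrow> small_symmetric V w \<and> bij_betw g (bd V) {..<length w} \<and>
     (\<forall>x\<in>bd V. w ! (g x) = fst x) \<and>
     (\<forall>a\<in>bd V. \<forall>b\<in>bd V. \<forall>c\<in>bd V. cyc (g a) (g b) (g c) = R a b c)"

lemma cyc_rot: "cyc a b c \<Longrightarrow> cyc b c a" unfolding cyc_def by auto
lemma cyc_asym: "cyc a b c \<Longrightarrow> \<not> cyc a c b" unfolding cyc_def by auto
lemma cyc_tot: "(a::nat) \<noteq> b \<Longrightarrow> b \<noteq> c \<Longrightarrow> a \<noteq> c \<Longrightarrow> cyc a b c \<or> cyc a c b" unfolding cyc_def by auto
lemma cyc_trans: "cyc a b c \<Longrightarrow> cyc a c d \<Longrightarrow> cyc a b d" unfolding cyc_def by auto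
lemma cyc_dist: "cyc a b c \<Longrightarrow> a \<noteq> b \<and> b \<noteq> c \<and> a \<noteq> c" unfolding cyc_def by auto
lemma cyc_lt: "a < c \<Longrightarrow> cyc a b c \<longleftrightarrow> a < b \<and> b < c" unfolding cyc_def by auto

lemma ss_len:
  assumes "small_symmetric V w" "finite V" shows "length w = 2 * card V"
proof -
  have set: "set w \<subseteq> V" and fib: "\<forall>v\<in>V. card {i. i<length w \<and> w!i = v} = 2"
    using assms(1) unfolding small_symmetric_def by auto
  have "{..<length w} = (\<Union>v\<in>V. {i. i<length w \<and> w!i = v})" using set nth_mem by fastforce
  hence "card {..<length w} = card (\<Union>v\<in>V. {i. i<length w \<and> w!i = v})" by simp
  also have "\<dots> = (\<Sum>v\<in>V. card {i. i<length w \<and> w!i = v})"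
    by (rule card_UN_disjoint) (use assms in auto)
  also have "\<dots> = (\<Sum>v\<in>V. 2)" using fib by simp
  finally show ?thesis by simp
qed

lemma construct:
  fixes V :: "'v set" and R :: "'v \<times> nat \<Rightarrow> 'v \<times> nat \<Rightarrow> 'v \<times> nat \<Rightarrow> bool"
  assumes fin: "finite V" and ne: "V \<noteq> {}"
  and rot: "\<And>a b c. a \<in> bd V \<Longrightarrow> b \<in> bd V \<Longrightarrow> c \<in> bd V \<Longrightarrow> R a b c \<Longrightarrow> R b c a"
  and asym: "\<And>a b c. a \<in> bd V \<Longrightarrow> b \<in> bd V \<Longrightarrow> c \<in> bd V \<Longrightarrow> R a b c \<Longrightarrow> \<not> R a c b"
  and tot: "\<And>a b c. a \<in> bd V \<Longrightarrow> b \<in> bd V \<Longrightarrow> c \<in> bd V \<Longrightarrow> a \<noteq> b \<Longrightarrow> b \<noteq> c \<Longrightarrow> a \<noteq> c \<Longrightarrow> R a b c \<or> R a c b"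
  and trans: "\<And>a b c d. a \<in> bd V \<Longrightarrow> b \<in> bd V \<Longrightarrow> c \<in> bd V \<Longrightarrow> d \<in> bd V \<Longrightarrow> R a b c \<Longrightarrow> R a c d \<Longrightarrow> R a b d"
  and irr: "\<And>a b c. a \<in> bd V \<Longrightarrow> b \<in> bd V \<Longrightarrow> c \<in> bd V \<Longrightarrow> R a b c \<Longrightarrow> a \<noteq> b \<and> b \<noteq> c \<and> a \<noteq> c"
  and anti: "\<And>v u e. v \<in> V \<Longrightarrow> u \<in> V \<Longrightarrow> u \<noteq> v \<Longrightarrow> e < 2 \<Longrightarrow> R (v,e) (u,0) (v,1-e) \<longleftrightarrow> \<not> R (v,e) (u,1) (v,1-e)"
  shows "\<exists>w g. good V w g R"
proof -
  let ?X = "bd V"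
  obtain v0 where v0: "v0 \<in> V" using ne by auto
  define b0 where "b0 = (v0, 0::nat)"
  have b0X: "b0 \<in> ?X" using v0 unfolding bd_def b0_def by auto
  have finX: "finite ?X" unfolding bd_def using fin by auto
  have cardX: "card ?X = 2 * card V" unfolding bd_def using fin by (simp add: card_cartesian_product)
  define lt where "lt x y \<longleftrightarrow> (x = b0 \<and> y \<noteq> b0) \<or> (x \<noteq> b0 \<and> y \<noteq> b0 \<and> R b0 x y)" for x y
  have lt_irr: "\<not> lt x x" if "x \<in> ?X" for x using irr[OF b0X that that] unfolding lt_def by auto
  have lt_trans: "lt x z" if "x\<in>?X" "y\<in>?X" "z\<in>?X" "lt x y" "lt y z" for x y z
    using that trans[OF b0X, of x y z] unfolding lt_def by auto
  have lt_tot: "lt x y \<or> lt y x" if "x\<in>?X" "y\<in>?X" "x\<noteq>y" for x y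
    using that tot[OF b0X, of x y] unfolding lt_def by auto
  have lt_ne: "lt x y \<Longrightarrow> y \<noteq> b0" for x y unfolding lt_def by auto
  define rk where "rk x = card {y\<in>?X. lt y x}" for x
  have rk_mono: "rk x < rk y" if "x\<in>?X" "y\<in>?X" "lt x y" for x y
  proof -
    have "{z\<in>?X. lt z x} \<subset> {z\<in>?X. lt z y}"
      using that lt_trans lt_irr by blast
    thus ?thesis unfolding rk_def by (rule psubset_card_mono[rotated]) (use finX in auto)
  qed
  have lt_iff: "lt x y \<longleftrightarrow> rk x < rk y" if "x\<in>?X" "y\<in>?X" for x y
    using rk_mono[OF that] rk_mono[OF that(2,1)] lt_tot[OF that] by force
  have inj: "inj_on rk ?X"
    by (rule inj_onI) (metis lt_tot rk_mono less_irrefl)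
  have rk_lt: "rk x < card ?X" if "x \<in> ?X" for x
  proof -
    have "{y\<in>?X. lt y x} \<subseteq> ?X - {x}" using lt_irr by auto
    hence "rk x \<le> card (?X - {x})" unfolding rk_def by (intro card_mono) (use finX in auto)
    thus ?thesis using that finX card_Diff1_less by fastforce
  qed
  have img: "rk ` ?X = {..<card ?X}"
    by (rule card_subset_eq) (use rk_lt card_image[OF inj] in auto)
  have A: "R a b c" if "a\<in>?X" "b\<in>?X" "c\<in>?X" "lt a b" "lt b c" for a b c
  proof (cases "a = b0")
    case True thus ?thesis using that unfolding lt_def by auto
  next
    case False
    hence 1: "R b0 a b" "R b0 b c" using that unfolding lt_def by auto
    have "R b b0 a" using rot[OF _ _ _ rot] 1(1) b0X that by blast
    moreover have "R b c b0" using rot 1(2) b0X that by blast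
    ultimately have "R b c a" using trans that b0X by blast
    thus ?thesis using rot[OF _ _ _ rot] that by blast
  qed
  have cyc_iff: "cyc (rk a) (rk b) (rk c) \<longleftrightarrow> R a b c" if X: "a\<in>?X" "b\<in>?X" "c\<in>?X" for a b c
  proof
    assume c: "cyc (rk a) (rk b) (rk c)"
    then consider "rk a < rk b" "rk b < rk c" | "rk b < rk c" "rk c < rk a" | "rk c < rk a" "rk a < rk b"
      unfolding cyc_def by auto
    thus "R a b c"
    proof cases
      case 1 thus ?thesis using A X lt_iff by blast
    next
      case 2 hence "R b c a" using A X lt_iff by blast
      thus ?thesis using rot[OF _ _ _ rot] X by blast
    next
      case 3 hence "R c a b" using A X lt_iff by blast
      thus ?thesis using rot X by blast
    qed
  next
    assume r: "R a b c"
    have d: "a \<noteq> b" "b \<noteq> c" "a \<noteq> c" using irr[OF X r] by auto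
    have "\<not> R a c b" using asym X r by blast
    moreover have "\<not> R c b a" using asym X r rot by blast
    moreover have "\<not> R b a c" using asym X r rot by blast
    ultimately have "\<not> (lt a c \<and> lt c b)" "\<not> (lt c b \<and> lt b a)" "\<not> (lt b a \<and> lt a c)"
      using A X by blast+
    moreover have "rk a \<noteq> rk b" "rk b \<noteq> rk c" "rk a \<noteq> rk c" using d inj X by (auto dest: inj_onD)
    ultimately show "cyc (rk a) (rk b) (rk c)" using lt_iff[OF X(1,2)] lt_iff[OF X(2,3)] lt_iff[OF X(1,3)]
      lt_iff[OF X(2,1)] lt_iff[OF X(3,2)] lt_iff[OF X(3,1)] unfolding cyc_def by linarith
  qed
  define n where "n = card V"
  define m where "m = card ?X"
  have mn: "m = 2 * n" unfolding m_def n_def cardX ..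
  have n1: "n \<ge> 1" unfolding n_def using fin ne by (simp add: Suc_le_eq card_gt_0_iff)
  define w where "w = map (\<lambda>i. fst (inv_into ?X rk i)) [0..<m]"
  have wlen: "length w = m" unfolding w_def by simp
  have wcol: "w ! rk x = fst x" if "x \<in> ?X" for x
    using that rk_lt inv_into_f_f[OF inj that] unfolding w_def m_def by simp
  have surjX: "\<exists>x\<in>?X. i = rk x" if "i < m" for i using that img unfolding m_def by auto
  define ant where "ant x = (fst x, 1 - snd x)" for x :: "'v \<times> nat"
  have antX: "ant x \<in> ?X" "ant (ant x) = x" "ant x \<noteq> x" "fst (ant x) = fst x" if "x\<in>?X" for x
    using that unfolding ant_def bd_def by auto
  have between: "card {y\<in>?X. R x y (ant x)} = n - 1" if x: "x \<in> ?X" for x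
  proof -
    obtain v e where xe: "x = (v,e)" "v \<in> V" "e < 2" using x unfolding bd_def by auto
    define f where "f u = (u, if R x (u,0) (ant x) then 0 else 1::nat)" for u
    have "{y\<in>?X. R x y (ant x)} = f ` (V - {v})"
    proof (intro equalityI subsetI)
      fix y assume y: "y \<in> {y\<in>?X. R x y (ant x)}"
      obtain u k where yk: "y = (u,k)" "u \<in> V" "k = 0 \<or> k = 1" using y unfolding bd_def by auto
      have "u \<noteq> v"
      proof
        assume "u = v"
        hence "y = x \<or> y = ant x" using yk xe unfolding ant_def by auto
        thus False using irr[of x y "ant x"] y x antX by auto
      qed
      moreover have "y = f u"
        using yk y anti[of v u e] xe \<open>u \<noteq> v\<close> unfolding f_def ant_def by auto
      ultimately show "y \<in> f ` (V - {v})" using yk by auto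
    next
      fix y assume "y \<in> f ` (V - {v})"
      then obtain u where u: "u \<in> V" "u \<noteq> v" "y = f u" by auto
      show "y \<in> {y\<in>?X. R x y (ant x)}"
        using u anti[of v u e] xe unfolding f_def ant_def bd_def by auto
    qed
    moreover have "inj_on f (V - {v})" unfolding f_def by (auto intro: inj_onI)
    ultimately show ?thesis using card_image[of f "V - {v}"] fin xe unfolding n_def by (simp add: card_Diff_singleton)
  qed
  have rk_ant1: "rk (ant x) = rk x + n" if x: "x \<in> ?X" and lt: "rk x < rk (ant x)" for x
  proof -
    have "rk ` {y\<in>?X. R x y (ant x)} = {rk x<..<rk (ant x)}"
    proof (intro equalityI subsetI)
      fix j assume "j \<in> rk ` {y\<in>?X. R x y (ant x)}"
      then obtain y where "y \<in> ?X" "R x y (ant x)" "j = rk y" by auto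
      thus "j \<in> {rk x<..<rk (ant x)}" using cyc_iff[of x y "ant x"] x antX cyc_lt[OF lt] by auto
    next
      fix j assume j: "j \<in> {rk x<..<rk (ant x)}"
      hence "j < m" using rk_lt[OF antX(1)[OF x]] unfolding m_def by auto
      then obtain y where y: "y\<in>?X" "j = rk y" using surjX by blast
      thus "j \<in> rk ` {y\<in>?X. R x y (ant x)}" using cyc_iff[of x y "ant x"] x antX cyc_lt[OF lt] j by auto
    qed
    hence "card {rk x<..<rk (ant x)} = n - 1" using between[OF x] card_image inj_on_subset[OF inj]
      by (metis (no_types, lifting) mem_Collect_eq subsetI)
    thus ?thesis using lt n1 by simp
  qed
  have rk_ant: "rk (ant x) = (rk x + n) mod m" if x: "x \<in> ?X" for x
  proof -
    have ne: "rk (ant x) \<noteq> rk x" using inj x antX by (metis inj_onD)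
    show ?thesis
    proof (cases "rk x < rk (ant x)")
      case True thus ?thesis using rk_ant1[OF x True] rk_lt[OF antX(1)[OF x]] unfolding m_def by simp
    next
      case False
      hence "rk (ant x) < rk (ant (ant x))" using ne antX x by simp
      hence "rk x = rk (ant x) + n" using rk_ant1[OF antX(1)[OF x]] antX x by simp
      moreover have "rk (ant x) < m" using rk_lt antX x unfolding m_def by blast
      ultimately show ?thesis using mn by (simp add: mult_2 add.assoc)
    qed
  qed
  have ss: "small_symmetric V w"
    unfolding small_symmetric_def
  proof (intro conjI ballI)
    show "set w \<subseteq> V"
    proof
      fix v assume "v \<in> set w"
      then obtain i where "i < m" "v = w ! i" using wlen by (auto simp: in_set_conv_nth)
      thus "v \<in> V" using surjX wcol unfolding bd_def by force
    qed
  next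
    fix v assume v: "v \<in> V"
    have "{i. i < length w \<and> w ! i = v} = rk ` {(v,0),(v,1)}"
    proof (intro equalityI subsetI)
      fix i assume "i \<in> {i. i < length w \<and> w ! i = v}"
      hence i: "i < m" "w ! i = v" using wlen by auto
      then obtain x where "x \<in> ?X" "i = rk x" using surjX by blast
      note this i
      thus "i \<in> rk ` {(v,0),(v,1)}" using wcol[of x] unfolding bd_def by force
    next
      fix i assume "i \<in> rk ` {(v,0),(v,1)}"
      thus "i \<in> {i. i < length w \<and> w ! i = v}" using v wcol rk_lt wlen unfolding m_def bd_def by auto
    qed
    moreover have "inj_on rk {(v,0),(v,1::nat)}" by (rule inj_on_subset[OF inj]) (use v in \<open>auto simp: bd_def\<close>)
    ultimately show "card {i. i < length w \<and> w ! i = v} = 2" using card_image by fastforce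
  next
    have "length w div 2 = n" using wlen mn by simp
    moreover have "rotate n w = w"
    proof (rule nth_equalityI)
      show "length (rotate n w) = length w" by simp
      fix i assume "i < length (rotate n w)"
      hence "i < m" using wlen by simp
      then obtain x where x: "x \<in> ?X" "i = rk x" using surjX by blast
      have "rotate n w ! i = w ! ((n + i) mod m)" using nth_rotate \<open>i < m\<close> wlen by metis
      also have "\<dots> = w ! rk (ant x)" using rk_ant[OF x(1)] x by (simp add: add.commute)
      also have "\<dots> = w ! i" using wcol antX x by simp
      finally show "rotate n w ! i = w ! i" .
    qed
    ultimately show "rotate (length w div 2) w = w" by simp
  qed
  have "good V w rk R"
    unfolding good_def using ss wcol cyc_iff inj img wlen unfolding m_def bij_betw_def by auto
  thus ?thesis by blast
qed



definition dc :: "'v set set \<Rightarrow> bool" where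
  "dc T \<longleftrightarrow> (\<forall>\<sigma>\<in>T. finite \<sigma> \<and> \<sigma> \<noteq> {} \<and> (\<forall>\<tau>. \<tau> \<subseteq> \<sigma> \<and> \<tau> \<noteq> {} \<longrightarrow> \<tau> \<in> T))"

definition G :: "('v set \<Rightarrow> 'v set \<Rightarrow> nat \<Rightarrow> nat) \<Rightarrow> 'v set \<Rightarrow> 'v \<times> nat \<Rightarrow> nat" where
  "G F \<sigma> b = (if card \<sigma> = 1 then snd b else F {fst b} \<sigma> (snd b))"

definition Rel :: "('v set \<Rightarrow> 'v set \<Rightarrow> nat \<Rightarrow> nat) \<Rightarrow> 'v \<times> nat \<Rightarrow> 'v \<times> nat \<Rightarrow> 'v \<times> nat \<Rightarrow> bool" where
  "Rel F a b c = (let \<tau> = {fst a, fst b, fst c} in cyc (G F \<tau> a) (G F \<tau> b) (G F \<tau> c))"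

lemma cc_ss: "consistent_collection T N F \<Longrightarrow> \<sigma> \<in> T \<Longrightarrow> small_symmetric \<sigma> (N \<sigma>)"
  unfolding consistent_collection_def by (drule conjunct1) (erule bspec)
lemma cc_morph: "consistent_collection T N F \<Longrightarrow> \<sigma> \<in> T \<Longrightarrow> \<tau> \<in> T \<Longrightarrow> \<tau> \<subset> \<sigma> \<Longrightarrow> necklace_morphism \<tau> (N \<tau>) (N \<sigma>) (F \<tau> \<sigma>)"
  unfolding consistent_collection_def by (drule conjunct2, drule conjunct1) blast
lemma cc_comp: "consistent_collection T N F \<Longrightarrow> \<rho> \<in> T \<Longrightarrow> \<tau> \<in> T \<Longrightarrow> \<sigma> \<in> T \<Longrightarrow> \<rho> \<subset> \<tau> \<Longrightarrow> \<tau> \<subset> \<sigma> \<Longrightarrow> i < length (N \<rho>) \<Longrightarrow> F \<tau> \<sigma> (F \<rho> \<tau> i) = F \<rho> \<sigma> i"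
  unfolding consistent_collection_def by (drule conjunct2, drule conjunct2) blast

lemma dc_fin: "dc T \<Longrightarrow> \<sigma> \<in> T \<Longrightarrow> finite \<sigma>" unfolding dc_def by blast
lemma dc_ne: "dc T \<Longrightarrow> \<sigma> \<in> T \<Longrightarrow> \<sigma> \<noteq> {}" unfolding dc_def by blast
lemma dc_sub: "dc T \<Longrightarrow> \<sigma> \<in> T \<Longrightarrow> \<tau> \<subseteq> \<sigma> \<Longrightarrow> \<tau> \<noteq> {} \<Longrightarrow> \<tau> \<in> T" unfolding dc_def by blast

lemma nm_inj: "necklace_morphism \<tau> u w f \<Longrightarrow> inj_on f {..<length u}" unfolding necklace_morphism_def by blast
lemma nm_img: "necklace_morphism \<tau> u w f \<Longrightarrow> f ` {..<length u} = {j. j < length w \<and> w ! j \<in> \<tau>}" unfolding necklace_morphism_def by blast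
lemma nm_col: "necklace_morphism \<tau> u w f \<Longrightarrow> i < length u \<Longrightarrow> w ! (f i) = u ! i" unfolding necklace_morphism_def by blast
lemma nm_cyc: "necklace_morphism \<tau> u w f \<Longrightarrow> i < length u \<Longrightarrow> j < length u \<Longrightarrow> k < length u \<Longrightarrow> cyc i j k \<Longrightarrow> cyc (f i) (f j) (f k)" unfolding necklace_morphism_def by blast

lemma bdE: assumes "x \<in> bd \<sigma>" obtains v e where "x = (v,e)" "v \<in> \<sigma>" "e < 2"
  using assms unfolding bd_def by force
lemma bdI: "v \<in> \<sigma> \<Longrightarrow> e < 2 \<Longrightarrow> (v,e) \<in> bd \<sigma>"
  unfolding bd_def by (auto simp: less_2_cases_iff)

lemma single_props:
  assumes "dc T" "consistent_collection T N F" "\<sigma> \<in> T" "v \<in> \<sigma>"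
  shows "{v} \<in> T" "length (N {v}) = 2" "\<And>e. e < 2 \<Longrightarrow> N {v} ! e = v"
proof -
  have "\<forall>\<tau>. \<tau> \<subseteq> \<sigma> \<and> \<tau> \<noteq> {} \<longrightarrow> \<tau> \<in> T" using assms(1,3) unfolding dc_def by blast
  thus T: "{v} \<in> T" using assms(4) by blast
  have ss: "small_symmetric {v} (N {v})" using cc_ss[OF assms(2) T] .
  show l: "length (N {v}) = 2" using ss_len[OF ss] by simp
  fix e :: nat assume "e < 2"
  hence "N {v} ! e \<in> set (N {v})" using l by simp
  moreover have "set (N {v}) \<subseteq> {v}" using ss unfolding small_symmetric_def by blast
  ultimately show "N {v} ! e = v" by blast
qed

lemma G_bij:
  assumes dc: "dc T" and cc: "consistent_collection T N F" and s: "\<sigma> \<in> T"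
  shows "bij_betw (G F \<sigma>) (bd \<sigma>) {..<length (N \<sigma>)} \<and> (\<forall>x\<in>bd \<sigma>. N \<sigma> ! (G F \<sigma> x) = fst x)"
proof -
  have fin: "finite \<sigma>" and ne: "\<sigma> \<noteq> {}" using dc_fin[OF dc s] dc_ne[OF dc s] .
  have ss: "small_symmetric \<sigma> (N \<sigma>)" using cc_ss[OF cc s] .
  have setw: "set (N \<sigma>) \<subseteq> \<sigma>" using ss unfolding small_symmetric_def by blast
  have len: "length (N \<sigma>) = 2 * card \<sigma>" using ss_len[OF ss fin] .
  show ?thesis
  proof (cases "card \<sigma> = 1")
    case True
    then obtain v where v: "\<sigma> = {v}" using card_1_singleton_iff by (metis One_nat_def)
    have bd: "bd \<sigma> = {(v,0),(v,1)}" unfolding bd_def v by auto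
    have col: "N \<sigma> ! e = v" if "e < 2" for e using single_props[OF dc cc s, of v] v that by auto
    have "G F \<sigma> = snd" using True unfolding G_def by (auto simp: fun_eq_iff)
    moreover have "bij_betw snd (bd \<sigma>) {..<length (N \<sigma>)}"
      unfolding bd bij_betw_def using len True by (auto simp: inj_on_def)
    ultimately show ?thesis using col unfolding bd by auto
  next
    case False
    have M: "necklace_morphism {v} (N {v}) (N \<sigma>) (F {v} \<sigma>)" if v: "v \<in> \<sigma>" for v
    proof -
      have "{v} \<subset> \<sigma>" using v False by auto
      thus ?thesis using cc_morph[OF cc s single_props(1)[OF dc cc s v]] by blast
    qed
    have Gx: "G F \<sigma> (v,e) = F {v} \<sigma> e" for v e using False unfolding G_def by auto
    have col: "N \<sigma> ! (G F \<sigma> (v,e)) = v \<and> G F \<sigma> (v,e) < length (N \<sigma>)" if "v \<in> \<sigma>" "e < 2" for v e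
    proof -
      have l: "e < length (N {v})" using single_props(2)[OF dc cc s that(1)] that(2) by simp
      have "N \<sigma> ! (F {v} \<sigma> e) = N {v} ! e" using nm_col[OF M[OF that(1)] l] .
      moreover have "F {v} \<sigma> e \<in> F {v} \<sigma> ` {..<length (N {v})}" using l by blast
      hence "F {v} \<sigma> e < length (N \<sigma>)" unfolding nm_img[OF M[OF that(1)]] by blast
      ultimately show ?thesis using single_props(3)[OF dc cc s that(1) that(2)] Gx by simp
    qed
    have inj: "inj_on (G F \<sigma>) (bd \<sigma>)"
    proof (rule inj_onI)
      fix x y assume x: "x \<in> bd \<sigma>" and y: "y \<in> bd \<sigma>" and eq: "G F \<sigma> x = G F \<sigma> y"
      obtain v e where xe: "x = (v,e)" "v \<in> \<sigma>" "e < 2" using x unfolding bd_def by auto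
      obtain v' e' where ye: "y = (v',e')" "v' \<in> \<sigma>" "e' < 2" using y unfolding bd_def by auto
      have "v = v'" using col[OF xe(2,3)] col[OF ye(2,3)] eq xe ye by metis
      hence "F {v} \<sigma> e = F {v} \<sigma> e'" using eq xe ye Gx by simp
      hence "e = e'" by (rule inj_onD[OF nm_inj[OF M[OF xe(2)]]]) (use xe ye single_props(2)[OF dc cc s xe(2)] in auto)
      thus "x = y" using xe ye \<open>v = v'\<close> by simp
    qed
    have img: "G F \<sigma> ` bd \<sigma> = {..<length (N \<sigma>)}"
    proof (intro equalityI subsetI)
      fix j assume "j \<in> G F \<sigma> ` bd \<sigma>"
      then obtain v e where "v \<in> \<sigma>" "e < 2" "j = G F \<sigma> (v,e)" by (auto elim: bdE)
      thus "j \<in> {..<length (N \<sigma>)}" using col by blast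
    next
      fix j assume j: "j \<in> {..<length (N \<sigma>)}"
      define v where "v = N \<sigma> ! j"
      have "v \<in> set (N \<sigma>)" using j unfolding v_def by simp
      hence v: "v \<in> \<sigma>" using setw by blast
      have "j \<in> {j. j < length (N \<sigma>) \<and> N \<sigma> ! j \<in> {v}}" using j v_def by simp
      hence "j \<in> F {v} \<sigma> ` {..<length (N {v})}" using nm_img[OF M[OF v]] by simp
      then obtain e where e: "e < length (N {v})" "j = F {v} \<sigma> e" by blast
      have "e < 2" using e single_props(2)[OF dc cc s v] by simp
      hence "(v,e) \<in> bd \<sigma>" using v unfolding bd_def by auto
      moreover have "j = G F \<sigma> (v,e)" using e Gx by simp
      ultimately show "j \<in> G F \<sigma> ` bd \<sigma>" by blast
    qed
    have "\<forall>x\<in>bd \<sigma>. N \<sigma> ! (G F \<sigma> x) = fst x"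
    proof
      fix x assume "x \<in> bd \<sigma>"
      then obtain v e where "v \<in> \<sigma>" "e < 2" "x = (v,e)" by (auto elim: bdE)
      thus "N \<sigma> ! (G F \<sigma> x) = fst x" using col by simp
    qed
    thus ?thesis using inj img unfolding bij_betw_def by blast
  qed
qed

lemma G_comp:
  assumes dc: "dc T" and cc: "consistent_collection T N F" and s: "\<sigma> \<in> T" and t: "\<tau> \<in> T"
    and st: "\<tau> \<subset> \<sigma>" and x: "x \<in> bd \<tau>"
  shows "F \<tau> \<sigma> (G F \<tau> x) = G F \<sigma> x"
proof -
  obtain v e where xe: "x = (v,e)" "v \<in> \<tau>" "e < 2" using x unfolding bd_def by auto
  have fs: "finite \<sigma>" using dc_fin[OF dc s] .
  have tne: "\<tau> \<noteq> {}" using xe by auto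
  have "card \<tau> < card \<sigma>" using psubset_card_mono[OF fs st] .
  moreover have "card \<tau> \<ge> 1" using tne dc_fin[OF dc t] by (simp add: Suc_le_eq card_gt_0_iff)
  ultimately have cs: "card \<sigma> \<noteq> 1" by auto
  show ?thesis
  proof (cases "card \<tau> = 1")
    case True
    hence "\<tau> = {v}" using xe card_1_singleton_iff by (metis One_nat_def singletonD)
    thus ?thesis using True cs xe unfolding G_def by auto
  next
    case False
    hence vt: "{v} \<subset> \<tau>" using xe by auto
    have T: "{v} \<in> T" using single_props[OF dc cc t xe(2)] by auto
    have "F \<tau> \<sigma> (F {v} \<tau> e) = F {v} \<sigma> e"
      using cc_comp[OF cc T t s vt st] xe single_props[OF dc cc t xe(2)] by auto
    thus ?thesis using False cs xe unfolding G_def by auto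
  qed
qed

lemma morph_reflect:
  assumes "necklace_morphism \<tau> u w f" "i < length u" "j < length u" "k < length u"
  shows "cyc (f i) (f j) (f k) \<longleftrightarrow> cyc i j k"
proof
  assume c: "cyc (f i) (f j) (f k)"
  have inj: "inj_on f {..<length u}" using nm_inj[OF assms(1)] .
  have "i \<noteq> j" "j \<noteq> k" "i \<noteq> k" using cyc_dist[OF c] by auto
  moreover have "\<not> cyc i k j"
  proof
    assume "cyc i k j"
    hence "cyc (f i) (f k) (f j)" using assms nm_cyc by blast
    thus False using cyc_asym[OF c] by simp
  qed
  ultimately show "cyc i j k" using cyc_tot by blast
next
  assume "cyc i j k" thus "cyc (f i) (f j) (f k)" using assms nm_cyc by blast
qed

lemma G_cyc:
  assumes dc: "dc T" and cc: "consistent_collection T N F" and s: "\<sigma> \<in> T"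
    and abc: "a \<in> bd \<sigma>" "b \<in> bd \<sigma>" "c \<in> bd \<sigma>"
  shows "cyc (G F \<sigma> a) (G F \<sigma> b) (G F \<sigma> c) = Rel F a b c"
proof -
  define \<tau> where "\<tau> = {fst a, fst b, fst c}"
  have sub: "\<tau> \<subseteq> \<sigma>" using abc unfolding \<tau>_def bd_def by auto
  have t: "\<tau> \<in> T" using dc_sub[OF dc s sub] unfolding \<tau>_def by blast
  have R: "Rel F a b c = cyc (G F \<tau> a) (G F \<tau> b) (G F \<tau> c)" unfolding Rel_def \<tau>_def Let_def ..
  show ?thesis
  proof (cases "\<tau> = \<sigma>")
    case True thus ?thesis using R by simp
  next
    case False
    hence st: "\<tau> \<subset> \<sigma>" using sub by auto
    have bt: "a \<in> bd \<tau>" "b \<in> bd \<tau>" "c \<in> bd \<tau>" using abc unfolding bd_def \<tau>_def by auto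
    have M: "necklace_morphism \<tau> (N \<tau>) (N \<sigma>) (F \<tau> \<sigma>)" using cc_morph[OF cc s t st] .
    have lt: "G F \<tau> y < length (N \<tau>)" if "y \<in> bd \<tau>" for y
      using G_bij[OF dc cc t] that unfolding bij_betw_def by auto
    show ?thesis using R G_comp[OF dc cc s t st] bt morph_reflect[OF M lt lt lt] by metis
  qed
qed

lemma G_good:
  assumes dc: "dc T" and cc: "consistent_collection T N F" and s: "\<sigma> \<in> T"
  shows "good \<sigma> (N \<sigma>) (G F \<sigma>) (Rel F)"
  using G_bij[OF dc cc s] G_cyc[OF dc cc s] cc_ss[OF cc s] unfolding good_def by blast



lemma gd_ss: "good \<sigma> w g R \<Longrightarrow> small_symmetric \<sigma> w" unfolding good_def by (elim conjE)
lemma gd_bij: "good \<sigma> w g R \<Longrightarrow> bij_betw g (bd \<sigma>) {..<length w}" unfolding good_def by (elim conjE)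
lemma gd_col: assumes "good \<sigma> w g R" "x \<in> bd \<sigma>" shows "w ! (g x) = fst x"
proof -
  have "\<forall>x\<in>bd \<sigma>. w ! (g x) = fst x" using assms(1) unfolding good_def by (elim conjE)
  thus ?thesis using assms(2) by (rule bspec)
qed
lemma gd_cyc: assumes "good \<sigma> w g R" "a \<in> bd \<sigma>" "b \<in> bd \<sigma>" "c \<in> bd \<sigma>" shows "cyc (g a) (g b) (g c) = R a b c"
proof -
  have "\<forall>a\<in>bd \<sigma>. \<forall>b\<in>bd \<sigma>. \<forall>c\<in>bd \<sigma>. cyc (g a) (g b) (g c) = R a b c" using assms(1) unfolding good_def by (elim conjE)
  thus ?thesis using assms(2-4) by simp
qed
lemma gd_inj: "good \<sigma> w g R \<Longrightarrow> inj_on g (bd \<sigma>)" by (drule gd_bij) (simp add: bij_betw_def)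
lemma gd_img: "good \<sigma> w g R \<Longrightarrow> g ` bd \<sigma> = {..<length w}" by (drule gd_bij) (simp add: bij_betw_def)
lemma gd_lt: assumes "good \<sigma> w g R" "x \<in> bd \<sigma>" shows "g x < length w"
proof -
  have "g x \<in> g ` bd \<sigma>" using assms(2) by (rule imageI)
  thus ?thesis unfolding gd_img[OF assms(1)] by simp
qed
lemma gd_surj: assumes "good \<sigma> w g R" "i < length w" obtains x where "x \<in> bd \<sigma>" "i = g x"
proof -
  have "i \<in> g ` bd \<sigma>" using gd_img[OF assms(1)] assms(2) by simp
  thus ?thesis using that by blast
qed

lemma bd_sub: "x \<in> bd \<sigma> \<Longrightarrow> fst x \<in> \<tau> \<Longrightarrow> x \<in> bd \<tau>" unfolding bd_def by auto
lemma bd_mono: "\<tau> \<subseteq> \<sigma> \<Longrightarrow> bd \<tau> \<subseteq> bd \<sigma>" unfolding bd_def by auto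

lemma consistent_from_good:
  assumes gd: "\<And>\<sigma>. \<sigma> \<in> T \<Longrightarrow> good \<sigma> (N \<sigma>) (H \<sigma>) Rl"
  and comp: "\<And>\<sigma> \<tau> x. \<sigma> \<in> T \<Longrightarrow> \<tau> \<in> T \<Longrightarrow> \<tau> \<subset> \<sigma> \<Longrightarrow> x \<in> bd \<tau> \<Longrightarrow> F \<tau> \<sigma> (H \<tau> x) = H \<sigma> x"
  shows "consistent_collection T N F"
  unfolding consistent_collection_def
proof (intro conjI ballI impI allI)
  fix \<sigma> assume "\<sigma> \<in> T" thus "small_symmetric \<sigma> (N \<sigma>)" using gd gd_ss by blast
next
  fix \<sigma> \<tau> assume s: "\<sigma> \<in> T" and t: "\<tau> \<in> T" and st: "\<tau> \<subset> \<sigma>"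
  have gs: "good \<sigma> (N \<sigma>) (H \<sigma>) Rl" and gt: "good \<tau> (N \<tau>) (H \<tau>) Rl" using gd s t by auto
  have bsub: "bd \<tau> \<subseteq> bd \<sigma>" using bd_mono st by auto
  show "necklace_morphism \<tau> (N \<tau>) (N \<sigma>) (F \<tau> \<sigma>)"
    unfolding necklace_morphism_def
  proof (intro conjI allI impI)
    show "inj_on (F \<tau> \<sigma>) {..<length (N \<tau>)}"
    proof (rule inj_onI)
      fix i j assume i: "i \<in> {..<length (N \<tau>)}" and j: "j \<in> {..<length (N \<tau>)}" and eq: "F \<tau> \<sigma> i = F \<tau> \<sigma> j"
      obtain x where x: "x \<in> bd \<tau>" "i = H \<tau> x" using gd_surj[OF gt] i by blast
      obtain y where y: "y \<in> bd \<tau>" "j = H \<tau> y" using gd_surj[OF gt] j by blast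
      have "H \<sigma> x = H \<sigma> y" using eq x y comp[OF s t st] by simp
      hence "x = y" using inj_onD[OF gd_inj[OF gs]] x y bsub by blast
      thus "i = j" using x y by simp
    qed
  next
    have "F \<tau> \<sigma> ` {..<length (N \<tau>)} = F \<tau> \<sigma> ` H \<tau> ` bd \<tau>" using gd_img[OF gt] by simp
    also have "\<dots> = H \<sigma> ` bd \<tau>" unfolding image_image using comp[OF s t st] by (intro image_cong) auto
    also have "\<dots> = {j. j < length (N \<sigma>) \<and> N \<sigma> ! j \<in> \<tau>}"
    proof (intro equalityI subsetI)
      fix j assume "j \<in> H \<sigma> ` bd \<tau>"
      then obtain x where x: "x \<in> bd \<tau>" "j = H \<sigma> x" by blast
      have "x \<in> bd \<sigma>" using x bsub by blast
      hence "j < length (N \<sigma>)" "N \<sigma> ! j = fst x" using gd_lt[OF gs] gd_col[OF gs] x by auto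
      moreover have "fst x \<in> \<tau>" using x unfolding bd_def by auto
      ultimately show "j \<in> {j. j < length (N \<sigma>) \<and> N \<sigma> ! j \<in> \<tau>}" by simp
    next
      fix j assume "j \<in> {j. j < length (N \<sigma>) \<and> N \<sigma> ! j \<in> \<tau>}"
      hence j: "j < length (N \<sigma>)" "N \<sigma> ! j \<in> \<tau>" by auto
      obtain y where y: "y \<in> bd \<sigma>" "j = H \<sigma> y" using gd_surj[OF gs j(1)] by blast
      have "fst y \<in> \<tau>" using j y gd_col[OF gs] by simp
      hence "y \<in> bd \<tau>" using bd_sub y by blast
      thus "j \<in> H \<sigma> ` bd \<tau>" using y by blast
    qed
    finally show "F \<tau> \<sigma> ` {..<length (N \<tau>)} = {j. j < length (N \<sigma>) \<and> N \<sigma> ! j \<in> \<tau>}" .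
  next
    fix i assume i: "i < length (N \<tau>)"
    obtain x where x: "x \<in> bd \<tau>" "i = H \<tau> x" using gd_surj[OF gt] i by blast
    have "x \<in> bd \<sigma>" using x bsub by blast
    thus "N \<sigma> ! F \<tau> \<sigma> i = N \<tau> ! i" using x comp[OF s t st] gd_col[OF gs] gd_col[OF gt] by simp
  next
    fix i j k assume i: "i < length (N \<tau>)" and j: "j < length (N \<tau>)" and k: "k < length (N \<tau>)" and c: "cyc i j k"
    obtain x where x: "x \<in> bd \<tau>" "i = H \<tau> x" using gd_surj[OF gt] i by blast
    obtain y where y: "y \<in> bd \<tau>" "j = H \<tau> y" using gd_surj[OF gt] j by blast
    obtain z where z: "z \<in> bd \<tau>" "k = H \<tau> z" using gd_surj[OF gt] k by blast
    have "Rl x y z" using gd_cyc[OF gt x(1) y(1) z(1)] c x y z by simp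
    moreover have "x \<in> bd \<sigma>" "y \<in> bd \<sigma>" "z \<in> bd \<sigma>" using x y z bsub by auto
    ultimately have "cyc (H \<sigma> x) (H \<sigma> y) (H \<sigma> z)" using gd_cyc[OF gs] by blast
    thus "cyc (F \<tau> \<sigma> i) (F \<tau> \<sigma> j) (F \<tau> \<sigma> k)" using x y z comp[OF s t st] by simp
  qed
next
  fix \<rho> \<tau> \<sigma> i assume r: "\<rho> \<in> T" and t: "\<tau> \<in> T" and s: "\<sigma> \<in> T" and rts: "\<rho> \<subset> \<tau> \<and> \<tau> \<subset> \<sigma>"
    and i: "i < length (N \<rho>)"
  have gr: "good \<rho> (N \<rho>) (H \<rho>) Rl" using gd r by auto
  obtain x where x: "x \<in> bd \<rho>" "i = H \<rho> x" using gd_surj[OF gr] i by blast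
  have "x \<in> bd \<tau>" using x bd_mono rts by blast
  hence "F \<tau> \<sigma> (F \<rho> \<tau> i) = H \<sigma> x" using x comp[OF t r] comp[OF s t] rts by simp
  moreover have "\<rho> \<subset> \<sigma>" using rts by blast
  hence "F \<rho> \<sigma> i = H \<sigma> x" using x comp[OF s r] by auto
  ultimately show "F \<tau> \<sigma> (F \<rho> \<tau> i) = F \<rho> \<sigma> i" by simp
qed

lemma iso_from_good:
  assumes g1: "\<And>\<sigma>. \<sigma> \<in> T \<Longrightarrow> good \<sigma> (N1 \<sigma>) (H1 \<sigma>) R1"
  and g2: "\<And>\<sigma>. \<sigma> \<in> T \<Longrightarrow> good \<sigma> (N2 \<sigma>) (H2 \<sigma>) R2"
  and Req: "\<And>\<sigma> a b c. \<sigma> \<in> T \<Longrightarrow> a \<in> bd \<sigma> \<Longrightarrow> b \<in> bd \<sigma> \<Longrightarrow> c \<in> bd \<sigma> \<Longrightarrow> R1 a b c = R2 a b c"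
  and c1: "\<And>\<sigma> \<tau> x. \<sigma> \<in> T \<Longrightarrow> \<tau> \<in> T \<Longrightarrow> \<tau> \<subset> \<sigma> \<Longrightarrow> x \<in> bd \<tau> \<Longrightarrow> F1 \<tau> \<sigma> (H1 \<tau> x) = H1 \<sigma> x"
  and c2: "\<And>\<sigma> \<tau> x. \<sigma> \<in> T \<Longrightarrow> \<tau> \<in> T \<Longrightarrow> \<tau> \<subset> \<sigma> \<Longrightarrow> x \<in> bd \<tau> \<Longrightarrow> F2 \<tau> \<sigma> (H2 \<tau> x) = H2 \<sigma> x"
  and ST: "S \<subseteq> T" and eqS: "\<And>\<sigma> x. \<sigma> \<in> S \<Longrightarrow> x \<in> bd \<sigma> \<Longrightarrow> H1 \<sigma> x = H2 \<sigma> x"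
  shows "iso_rel S T N1 F1 N2 F2"
proof -
  define \<phi> where "\<phi> \<sigma> i = H2 \<sigma> (inv_into (bd \<sigma>) (H1 \<sigma>) i)" for \<sigma> i
  have phi: "\<phi> \<sigma> (H1 \<sigma> x) = H2 \<sigma> x" if "\<sigma> \<in> T" "x \<in> bd \<sigma>" for \<sigma> x
    unfolding \<phi>_def using inv_into_f_f[OF gd_inj[OF g1[OF that(1)]] that(2)] by simp
  show ?thesis unfolding iso_rel_def
  proof (intro exI[of _ \<phi>] conjI ballI allI impI)
    fix \<sigma> assume s: "\<sigma> \<in> T"
    have a: "good \<sigma> (N1 \<sigma>) (H1 \<sigma>) R1" and b: "good \<sigma> (N2 \<sigma>) (H2 \<sigma>) R2" using g1 g2 s by auto
    show "necklace_iso (N1 \<sigma>) (N2 \<sigma>) (\<phi> \<sigma>)"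
      unfolding necklace_iso_def necklace_morphism_def
    proof (intro conjI allI impI)
      show "inj_on (\<phi> \<sigma>) {..<length (N1 \<sigma>)}"
      proof (rule inj_onI)
        fix i j assume i: "i \<in> {..<length (N1 \<sigma>)}" and j: "j \<in> {..<length (N1 \<sigma>)}" and eq: "\<phi> \<sigma> i = \<phi> \<sigma> j"
        obtain x where x: "x \<in> bd \<sigma>" "i = H1 \<sigma> x" using gd_surj[OF a] i by blast
        obtain y where y: "y \<in> bd \<sigma>" "j = H1 \<sigma> y" using gd_surj[OF a] j by blast
        have "H2 \<sigma> x = H2 \<sigma> y" using eq x y phi s by simp
        hence "x = y" using inj_onD[OF gd_inj[OF b]] x y by blast
        thus "i = j" using x y by simp
      qed
    next
      have "\<phi> \<sigma> ` {..<length (N1 \<sigma>)} = \<phi> \<sigma> ` H1 \<sigma> ` bd \<sigma>" using gd_img[OF a] by simp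
      also have "\<dots> = H2 \<sigma> ` bd \<sigma>" unfolding image_image using phi s by (intro image_cong) auto
      also have "\<dots> = {j. j < length (N2 \<sigma>) \<and> N2 \<sigma> ! j \<in> set (N2 \<sigma>)}" using gd_img[OF b] by auto
      finally show "\<phi> \<sigma> ` {..<length (N1 \<sigma>)} = {j. j < length (N2 \<sigma>) \<and> N2 \<sigma> ! j \<in> set (N2 \<sigma>)}" .
    next
      fix i assume i: "i < length (N1 \<sigma>)"
      obtain x where x: "x \<in> bd \<sigma>" "i = H1 \<sigma> x" using gd_surj[OF a] i by blast
      show "N2 \<sigma> ! \<phi> \<sigma> i = N1 \<sigma> ! i" using x phi s gd_col[OF a] gd_col[OF b] by simp
    next
      fix i j k assume i: "i < length (N1 \<sigma>)" and j: "j < length (N1 \<sigma>)" and k: "k < length (N1 \<sigma>)" and c: "cyc i j k"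
      obtain x where x: "x \<in> bd \<sigma>" "i = H1 \<sigma> x" using gd_surj[OF a] i by blast
      obtain y where y: "y \<in> bd \<sigma>" "j = H1 \<sigma> y" using gd_surj[OF a] j by blast
      obtain z where z: "z \<in> bd \<sigma>" "k = H1 \<sigma> z" using gd_surj[OF a] k by blast
      have "R1 x y z" using gd_cyc[OF a x(1) y(1) z(1)] c x y z by simp
      hence "R2 x y z" using Req[OF s x(1) y(1) z(1)] by simp
      hence "cyc (H2 \<sigma> x) (H2 \<sigma> y) (H2 \<sigma> z)" using gd_cyc[OF b x(1) y(1) z(1)] by simp
      thus "cyc (\<phi> \<sigma> i) (\<phi> \<sigma> j) (\<phi> \<sigma> k)" using x y z phi s by simp
    qed
  next
    fix \<sigma> i assume s: "\<sigma> \<in> S" and i: "i < length (N1 \<sigma>)"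
    have sT: "\<sigma> \<in> T" using s ST by blast
    have a: "good \<sigma> (N1 \<sigma>) (H1 \<sigma>) R1" using g1 sT by auto
    obtain x where x: "x \<in> bd \<sigma>" "i = H1 \<sigma> x" using gd_surj[OF a] i by blast
    show "\<phi> \<sigma> i = i" using phi[OF sT x(1)] eqS[OF s x(1)] x by simp
  next
    fix \<sigma> \<tau> i assume s: "\<sigma> \<in> T" and t: "\<tau> \<in> T" and st: "\<tau> \<subset> \<sigma>" and i: "i < length (N1 \<tau>)"
    have a: "good \<tau> (N1 \<tau>) (H1 \<tau>) R1" using g1 t by auto
    obtain x where x: "x \<in> bd \<tau>" "i = H1 \<tau> x" using gd_surj[OF a] i by blast
    have xs: "x \<in> bd \<sigma>" using x bd_mono st by blast
    show "\<phi> \<sigma> (F1 \<tau> \<sigma> i) = F2 \<tau> \<sigma> (\<phi> \<tau> i)"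
      using x c1[OF s t st x(1)] c2[OF s t st x(1)] phi[OF s xs] phi[OF t x(1)] by simp
  qed
qed

lemma arith4:
  assumes "p < 4" "(q::nat) < 4" "q \<noteq> p" "q \<noteq> (2+p) mod 4"
  shows "cyc p q ((2+p) mod 4) \<longleftrightarrow> \<not> cyc p ((2+q) mod 4) ((2+p) mod 4)"
proof -
  have "p = 0 \<or> p = 1 \<or> p = 2 \<or> p = 3" using assms by arith
  moreover have "q = 0 \<or> q = 1 \<or> q = 2 \<or> q = 3" using assms by arith
  ultimately show ?thesis using assms by (elim disjE) (simp_all add: cyc_def)
qed

lemma anti_good:
  assumes g: "good \<tau> w g R" and tau: "\<tau> = {u,v}" and uv: "u \<noteq> v" and e: "e < 2"
  shows "R (v,e) (u,0) (v,1-e) \<longleftrightarrow> \<not> R (v,e) (u,1) (v,1-e)"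
proof -
  have ss: "small_symmetric \<tau> w" using gd_ss[OF g] .
  have "card \<tau> = 2" using tau uv by simp
  hence len: "length w = 4" using ss_len[OF ss] tau by simp
  have "rotate (length w div 2) w = w" using ss unfolding small_symmetric_def by (elim conjE)
  hence rot: "rotate 2 w = w" using len by simp
  have sym: "w ! ((2 + i) mod 4) = w ! i" if "i < 4" for i
  proof -
    have "rotate 2 w ! i = w ! ((2 + i) mod length w)" using that len by (intro nth_rotate) simp
    thus ?thesis using rot len by simp
  qed
  have fib: "j = g (c,0) \<or> j = g (c,1)" if "j < 4" "w ! j = c" for j c
  proof -
    have "j < length w" using that len by simp
    then obtain y where y: "y \<in> bd \<tau>" "j = g y" using gd_surj[OF g] by blast
    obtain c' k where ck: "y = (c',k)" "k < 2" using y by (auto elim: bdE)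
    have "fst y = c" using gd_col[OF g y(1)] y that by simp
    hence "y = (c,0) \<or> y = (c,1)" using ck by (auto simp: less_2_cases_iff)
    thus ?thesis using y by auto
  qed
  have bdv: "(v,k) \<in> bd \<tau>" "(u,k) \<in> bd \<tau>" if "k < 2" for k using that tau by (auto intro: bdI)
  have e': "1 - e < 2" by simp
  define p where "p = g (v,e)"
  define p' where "p' = g (v,1-e)"
  define q where "q = g (u,0)"
  define q' where "q' = g (u,1)"
  have b1: "(v,e) \<in> bd \<tau>" "(v,1-e) \<in> bd \<tau>" "(u,0) \<in> bd \<tau>" "(u,1) \<in> bd \<tau>"
    using bdv e e' by auto
  have lt: "p < 4" "q < 4" "p' < 4" "q' < 4" unfolding p_def p'_def q_def q'_def
    using gd_lt[OF g b1(1)] gd_lt[OF g b1(2)] gd_lt[OF g b1(3)] gd_lt[OF g b1(4)] len by auto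
  have colp: "w ! p = v" "w ! p' = v" "w ! q = u" "w ! q' = u" unfolding p_def p'_def q_def q'_def
    using gd_col[OF g b1(1)] gd_col[OF g b1(2)] gd_col[OF g b1(3)] gd_col[OF g b1(4)] by auto
  have inj: "inj_on g (bd \<tau>)" using gd_inj[OF g] .
  have "(2 + p) mod 4 \<noteq> p" using lt by arith
  moreover have "w ! ((2+p) mod 4) = v" using sym lt colp by simp
  moreover have "(2+p) mod 4 < 4" by simp
  ultimately have "(2+p) mod 4 = g (v,0) \<or> (2+p) mod 4 = g (v,1)" "(2+p) mod 4 \<noteq> g (v,e)"
    using fib[of "(2+p) mod 4" v] unfolding p_def by auto
  hence p'eq: "p' = (2+p) mod 4" unfolding p'_def using e by (auto simp: less_2_cases_iff)
  have "(2 + q) mod 4 \<noteq> q" using lt by arith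
  moreover have "w ! ((2+q) mod 4) = u" using sym lt colp by simp
  moreover have "(2+q) mod 4 < 4" by simp
  ultimately have q'eq: "q' = (2+q) mod 4"
    using fib[of "(2+q) mod 4" u] unfolding q_def q'_def by auto
  have "q \<noteq> p" "q \<noteq> p'" using colp uv by auto
  hence "cyc p q p' \<longleftrightarrow> \<not> cyc p q' p'" using arith4[of p q] lt p'eq q'eq by simp
  moreover have "R (v,e) (u,0) (v,1-e) = cyc p q p'" unfolding p_def q_def p'_def
    using gd_cyc[OF g b1(1) b1(3) b1(2)] by simp
  moreover have "R (v,e) (u,1) (v,1-e) = cyc p q' p'" unfolding p_def q'_def p'_def
    using gd_cyc[OF g b1(1) b1(4) b1(2)] by simp
  ultimately show ?thesis by simp
qed



lemma card3: "card {a,b,c} \<le> 4" by (auto simp: card_insert_if)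
lemma card4: "card {a,b,c,d} \<le> 4" by (auto simp: card_insert_if)

theorem mainTheorem12:
  fixes B :: "'v set set"
    and N :: "'v set \<Rightarrow> 'v list"
    and F :: "'v set \<Rightarrow> 'v set \<Rightarrow> nat \<Rightarrow> nat"
  assumes "simplicial_complex B"
    and "consistent_collection (skeleton 3 B) N F"
  shows "(\<exists>N' F'. consistent_collection B N' F' \<and> extends_collection (skeleton 3 B) N F N' F')
       \<and> (\<forall>N1 F1 N2 F2.
            consistent_collection B N1 F1 \<and> extends_collection (skeleton 3 B) N F N1 F1 \<and>
            consistent_collection B N2 F2 \<and> extends_collection (skeleton 3 B) N F N2 F2
            \<longrightarrow> iso_rel (skeleton 3 B) B N1 F1 N2 F2)"
proof -
  define S where "S = skeleton 3 B"
  have ccS: "consistent_collection S N F" using assms(2) unfolding S_def .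
  have scB: "finite B" "\<And>\<sigma>. \<sigma> \<in> B \<Longrightarrow> finite \<sigma>" "\<And>\<sigma>. \<sigma> \<in> B \<Longrightarrow> \<sigma> \<noteq> {}"
    "\<And>\<sigma> \<tau>. \<sigma> \<in> B \<Longrightarrow> \<tau> \<subseteq> \<sigma> \<Longrightarrow> \<tau> \<noteq> {} \<Longrightarrow> \<tau> \<in> B"
    using assms(1) unfolding simplicial_complex_def by blast+
  have memS: "\<sigma> \<in> S \<longleftrightarrow> \<sigma> \<in> B \<and> card \<sigma> \<le> 4" for \<sigma> unfolding S_def skeleton_def by simp
  have dcB: "dc B" unfolding dc_def using scB by blast
  have dcS: "dc S" unfolding dc_def
  proof (intro ballI conjI allI impI)
    fix \<sigma> assume s: "\<sigma> \<in> S"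
    thus "finite \<sigma>" "\<sigma> \<noteq> {}" using memS scB by auto
    fix \<tau> assume "\<tau> \<subseteq> \<sigma> \<and> \<tau> \<noteq> {}"
    moreover have "card \<tau> \<le> card \<sigma>" using \<open>finite \<sigma>\<close> calculation card_mono by blast
    ultimately show "\<tau> \<in> S" using s memS scB(4) by (meson order_trans)
  qed
  have SB: "S \<subseteq> B" using memS by blast
  have goodS: "good \<sigma> (N \<sigma>) (G F \<sigma>) (Rel F)" if "\<sigma> \<in> S" for \<sigma> using G_good[OF dcS ccS that] .
  have loc: "Rel F a b c = cyc (G F \<tau> a) (G F \<tau> b) (G F \<tau> c)"
    if "\<sigma> \<in> B" "\<tau> \<subseteq> \<sigma>" "\<tau> \<noteq> {}" "card \<tau> \<le> 4" "a \<in> bd \<tau>" "b \<in> bd \<tau>" "c \<in> bd \<tau>" for \<sigma> \<tau> a b c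
  proof -
    have "\<tau> \<in> S" using that memS scB(4) by blast
    thus ?thesis using gd_cyc[OF goodS that(5-7)] by simp
  qed
  have fsub: "{fst a, fst b, fst c} \<subseteq> \<sigma>" if "a \<in> bd \<sigma>" "b \<in> bd \<sigma>" "c \<in> bd \<sigma>" for a b c \<sigma>
    using that unfolding bd_def by auto
  have big: "\<exists>p. good \<sigma> (fst p) (snd p) (Rel F)" if s: "\<sigma> \<in> B" for \<sigma>
  proof -
    have "\<exists>w g. good \<sigma> w g (Rel F)"
    proof (rule construct)
      show "finite \<sigma>" "\<sigma> \<noteq> {}" using scB s by auto
    next
      fix a b c assume abc: "a \<in> bd \<sigma>" "b \<in> bd \<sigma>" "c \<in> bd \<sigma>" "Rel F a b c"
      let ?t = "{fst a, fst b, fst c}"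
      have t: "?t \<subseteq> \<sigma>" "?t \<noteq> {}" "card ?t \<le> 4" using fsub[OF abc(1-3)] card3 by auto
      have bt: "a \<in> bd ?t" "b \<in> bd ?t" "c \<in> bd ?t" using bd_sub[OF abc(1)] bd_sub[OF abc(2)] bd_sub[OF abc(3)] by auto
      show "Rel F b c a" using abc(4) loc[OF s t bt] loc[OF s t bt(2,3,1)] cyc_rot by blast
    next
      fix a b c assume abc: "a \<in> bd \<sigma>" "b \<in> bd \<sigma>" "c \<in> bd \<sigma>" "Rel F a b c"
      let ?t = "{fst a, fst b, fst c}"
      have t: "?t \<subseteq> \<sigma>" "?t \<noteq> {}" "card ?t \<le> 4" using fsub[OF abc(1-3)] card3 by auto
      have bt: "a \<in> bd ?t" "b \<in> bd ?t" "c \<in> bd ?t" using bd_sub[OF abc(1)] bd_sub[OF abc(2)] bd_sub[OF abc(3)] by auto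
      show "\<not> Rel F a c b" using abc(4) loc[OF s t bt] loc[OF s t bt(1,3,2)] cyc_asym by blast
    next
      fix a b c assume abc: "a \<in> bd \<sigma>" "b \<in> bd \<sigma>" "c \<in> bd \<sigma>" "a \<noteq> b" "b \<noteq> c" "a \<noteq> c"
      let ?t = "{fst a, fst b, fst c}"
      have t: "?t \<subseteq> \<sigma>" "?t \<noteq> {}" "card ?t \<le> 4" using fsub[OF abc(1-3)] card3 by auto
      have bt: "a \<in> bd ?t" "b \<in> bd ?t" "c \<in> bd ?t" using bd_sub[OF abc(1)] bd_sub[OF abc(2)] bd_sub[OF abc(3)] by auto
      have tS: "?t \<in> S" using t memS scB(4) s by blast
      have inj: "inj_on (G F ?t) (bd ?t)" using gd_inj[OF goodS[OF tS]] .
      have "G F ?t a \<noteq> G F ?t b" "G F ?t b \<noteq> G F ?t c" "G F ?t a \<noteq> G F ?t c"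
        using inj_onD[OF inj] bt abc(4-6) by blast+
      thus "Rel F a b c \<or> Rel F a c b" using loc[OF s t bt] loc[OF s t bt(1,3,2)] cyc_tot by blast
    next
      fix a b c d assume abc: "a \<in> bd \<sigma>" "b \<in> bd \<sigma>" "c \<in> bd \<sigma>" "d \<in> bd \<sigma>" "Rel F a b c" "Rel F a c d"
      let ?t = "{fst a, fst b, fst c, fst d}"
      have t: "?t \<subseteq> \<sigma>" "?t \<noteq> {}" "card ?t \<le> 4" using abc(1-4) card4 unfolding bd_def by auto
      have bt: "a \<in> bd ?t" "b \<in> bd ?t" "c \<in> bd ?t" "d \<in> bd ?t" using bd_sub[OF abc(1)] bd_sub[OF abc(2)] bd_sub[OF abc(3)] bd_sub[OF abc(4)] by auto
      show "Rel F a b d" using abc(5,6) loc[OF s t bt(1,2,3)] loc[OF s t bt(1,3,4)] loc[OF s t bt(1,2,4)]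
        cyc_trans by blast
    next
      fix a b c assume abc: "a \<in> bd \<sigma>" "b \<in> bd \<sigma>" "c \<in> bd \<sigma>" "Rel F a b c"
      let ?t = "{fst a, fst b, fst c}"
      have t: "?t \<subseteq> \<sigma>" "?t \<noteq> {}" "card ?t \<le> 4" using fsub[OF abc(1-3)] card3 by auto
      have bt: "a \<in> bd ?t" "b \<in> bd ?t" "c \<in> bd ?t" using bd_sub[OF abc(1)] bd_sub[OF abc(2)] bd_sub[OF abc(3)] by auto
      have "cyc (G F ?t a) (G F ?t b) (G F ?t c)" using abc(4) loc[OF s t bt] by simp
      thus "a \<noteq> b \<and> b \<noteq> c \<and> a \<noteq> c" using cyc_dist by blast
    next
      fix v u and e :: nat assume vu: "v \<in> \<sigma>" "u \<in> \<sigma>" "u \<noteq> v" "e < 2"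
      let ?t = "{u,v}"
      have t: "?t \<subseteq> \<sigma>" "?t \<noteq> {}" "card ?t \<le> 4" using vu by auto
      have tS: "?t \<in> S" using t memS scB(4) s by blast
      show "Rel F (v,e) (u,0) (v,1-e) \<longleftrightarrow> \<not> Rel F (v,e) (u,1) (v,1-e)"
        using anti_good[OF goodS[OF tS] refl vu(3,4)] .
    qed
    thus ?thesis by auto
  qed
  define C where "C \<sigma> = (SOME p. good \<sigma> (fst p) (snd p) (Rel F))" for \<sigma>
  have Cgood: "good \<sigma> (fst (C \<sigma>)) (snd (C \<sigma>)) (Rel F)" if "\<sigma> \<in> B" for \<sigma>
    unfolding C_def using someI_ex[OF big[OF that]] .
  define N' where "N' \<sigma> = (if \<sigma> \<in> S then N \<sigma> else fst (C \<sigma>))" for \<sigma>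
  define Gn where "Gn \<sigma> = (if \<sigma> \<in> S then G F \<sigma> else snd (C \<sigma>))" for \<sigma>
  define F' where "F' \<tau> \<sigma> = (if \<sigma> \<in> S then F \<tau> \<sigma> else (\<lambda>i. Gn \<sigma> (inv_into (bd \<tau>) (Gn \<tau>) i)))" for \<tau> \<sigma>
  have gn: "good \<sigma> (N' \<sigma>) (Gn \<sigma>) (Rel F)" if "\<sigma> \<in> B" for \<sigma>
    using goodS Cgood[OF that] unfolding N'_def Gn_def by auto
  have cn: "F' \<tau> \<sigma> (Gn \<tau> x) = Gn \<sigma> x" if "\<sigma> \<in> B" "\<tau> \<in> B" "\<tau> \<subset> \<sigma>" "x \<in> bd \<tau>" for \<sigma> \<tau> x
  proof (cases "\<sigma> \<in> S")
    case True
    have "\<tau> \<noteq> {}" using that(4) unfolding bd_def by auto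
    hence tS: "\<tau> \<in> S" using dc_sub[OF dcS True] that(3) by blast
    thus ?thesis using G_comp[OF dcS ccS True tS that(3,4)] True unfolding F'_def Gn_def by simp
  next
    case False
    thus ?thesis using inv_into_f_f[OF gd_inj[OF gn[OF that(2)]] that(4)] unfolding F'_def by simp
  qed
  have ex: "consistent_collection B N' F' \<and> extends_collection S N F N' F'"
  proof
    show "consistent_collection B N' F'" using consistent_from_good[of B N' Gn "Rel F" F'] gn cn by blast
    show "extends_collection S N F N' F'" unfolding extends_collection_def N'_def F'_def by simp
  qed
  have ext_F: "F1 \<tau> \<sigma> i = F \<tau> \<sigma> i" if "extends_collection S N F N1 F1" "\<sigma> \<in> S" "\<tau> \<in> S" "\<tau> \<subset> \<sigma>" "i < length (N \<tau>)"
    for N1 F1 \<tau> \<sigma> i using that unfolding extends_collection_def by blast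
  have eqG: "G F1 \<sigma> x = G F \<sigma> x" if ext: "extends_collection S N F N1 F1" and s: "\<sigma> \<in> S" and x: "x \<in> bd \<sigma>" for N1 F1 \<sigma> x
  proof -
    obtain v e where ve: "x = (v,e)" "v \<in> \<sigma>" "e < 2" using x by (auto elim: bdE)
    show ?thesis
    proof (cases "card \<sigma> = 1")
      case True thus ?thesis unfolding G_def by simp
    next
      case False
      hence vs: "{v} \<subset> \<sigma>" using ve by auto
      have vS: "{v} \<in> S" using dc_sub[OF dcS s] ve by blast
      have "length (N {v}) = 2" using single_props(2)[OF dcS ccS s ve(2)] .
      hence "F1 {v} \<sigma> e = F {v} \<sigma> e" using ext_F[OF ext s vS vs] ve by simp
      thus ?thesis using False ve unfolding G_def by simp
    qed
  qed
  have eqR: "Rel F1 a b c = Rel F a b c"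
    if ext: "extends_collection S N F N1 F1" and s: "\<sigma> \<in> B" and abc: "a \<in> bd \<sigma>" "b \<in> bd \<sigma>" "c \<in> bd \<sigma>" for N1 F1 \<sigma> a b c
  proof -
    let ?t = "{fst a, fst b, fst c}"
    have t: "?t \<subseteq> \<sigma>" "?t \<noteq> {}" "card ?t \<le> 4" using fsub[OF abc] card3 by auto
    have tS: "?t \<in> S" using t memS scB(4) s by blast
    have bt: "a \<in> bd ?t" "b \<in> bd ?t" "c \<in> bd ?t" using bd_sub[OF abc(1)] bd_sub[OF abc(2)] bd_sub[OF abc(3)] by auto
    show ?thesis unfolding Rel_def Let_def using eqG[OF ext tS] bt by simp
  qed
  have un: "iso_rel S B N1 F1 N2 F2"
    if c1: "consistent_collection B N1 F1" and e1: "extends_collection S N F N1 F1"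
    and c2: "consistent_collection B N2 F2" and e2: "extends_collection S N F N2 F2" for N1 F1 N2 F2
  proof (rule iso_from_good)
    show "\<And>\<sigma>. \<sigma> \<in> B \<Longrightarrow> good \<sigma> (N1 \<sigma>) (G F1 \<sigma>) (Rel F1)" using G_good[OF dcB c1] .
    show "\<And>\<sigma>. \<sigma> \<in> B \<Longrightarrow> good \<sigma> (N2 \<sigma>) (G F2 \<sigma>) (Rel F2)" using G_good[OF dcB c2] .
    show "\<And>\<sigma> a b c. \<sigma> \<in> B \<Longrightarrow> a \<in> bd \<sigma> \<Longrightarrow> b \<in> bd \<sigma> \<Longrightarrow> c \<in> bd \<sigma> \<Longrightarrow> Rel F1 a b c = Rel F2 a b c"
      using eqR[OF e1] eqR[OF e2] by metis
    show "\<And>\<sigma> \<tau> x. \<sigma> \<in> B \<Longrightarrow> \<tau> \<in> B \<Longrightarrow> \<tau> \<subset> \<sigma> \<Longrightarrow> x \<in> bd \<tau> \<Longrightarrow> F1 \<tau> \<sigma> (G F1 \<tau> x) = G F1 \<sigma> x"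
      using G_comp[OF dcB c1] .
    show "\<And>\<sigma> \<tau> x. \<sigma> \<in> B \<Longrightarrow> \<tau> \<in> B \<Longrightarrow> \<tau> \<subset> \<sigma> \<Longrightarrow> x \<in> bd \<tau> \<Longrightarrow> F2 \<tau> \<sigma> (G F2 \<tau> x) = G F2 \<sigma> x"
      using G_comp[OF dcB c2] .
    show "S \<subseteq> B" using SB .
    show "\<And>\<sigma> x. \<sigma> \<in> S \<Longrightarrow> x \<in> bd \<sigma> \<Longrightarrow> G F1 \<sigma> x = G F2 \<sigma> x"
      using eqG[OF e1] eqG[OF e2] by metis
  qed
  show ?thesis unfolding S_def[symmetric] using ex un by blast
qed


end
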